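(* Assume (A1) and (A2). Then for every $l\in\mathbb N$ and every bounded measurable $\varphi:\mathsf X\to\mathbb R$, $$\mathbb E\big[\widehat{\pi_0(\varphi)}_0\big]=\pi_0(\varphi),\qquad \mathbb E[\xi_{l,0}]=\pi_l(\varphi)-\pi_{l-1}(\varphi).$$
   Context: Setting. $(\mathsf X,\mathcal X)$ is a measurable space with $\mathsf X$ compact. $\tilde{\mathsf d}$ is a measurable metric on $\mathsf X$ with $\sup_{x,w\in\mathsf X}\tilde{\mathsf d}(x,w)<\infty$. $\pi$ and $(\pi_l)_{l\in\mathbb{Z}^+}$ are probability measures on $\mathsf X$, and $\Delta_l:=2^{-l}$. For each $l\in\mathbb{Z}^+$, $K_l$ is a Markov kernel on $\mathsf X$ with $\pi_lK_l=\pi_l$, and $\nu_l$ is a probability measure on $\mathsf X$. For a Markov kernel $K$ and bounded measurable $\varphi$, $K(\varphi)(x)=\int\varphi(x')K(x,dx')$, $K^n$ is the $n$-fold iterated kernel ($K^0$ the identity), and $\mu(\varphi)=\int\varphi\,d\mu$. $\|\mu-\nu\|_{tv}=\sup_{A\in\mathcal X}|\mu(A)-\nu(A)|$. $\|\varphi\|_\infty=\sup_x|\varphi(x)|$. $\mathbb{Z}^+=\{0,1,2,\dots\}$, $\mathbb N=\{1,2,\dots\}$. For $s\in\mathbb{Z}^+$, let $\tilde\nu_s$ be a probability measure on $\mathsf X^2$ both of whose marginals equal $\nu_s$, and let $\check\nu_s(d(x,w)):=\int\tilde\nu_s(d(x',w'))K_s(x',dx)\delta_{w'}(dw)$. Level-0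 chain. $(X_{n,0},W_{n,0})_{n\ge0}$ is a Markov chain on $\mathsf X^2$ with initial law $\check\nu_0$ and transition kernel $\check K_0$, where $\check K_0((x,w),\cdot)$ is a probability measure on $\mathsf X^2$ with first marginal $K_0(x,\cdot)$ and second marginal $K_0(w,\cdot)$. Its meeting time is $\tau_0=\inf\{n\ge1:X_{n,0}=W_{n,0}\}$, and the chain is faithful: $X_{n,0}=W_{n,0}$ for all $n\ge\tau_0$. Increment chains. For each $l\in\mathbb N$, $(Z_{n,l,l-1})_{n\ge0}$ with $Z_{n,l,l-1}=((X_{n,l},W_{n,l}),(X_{n,l-1},W_{n,l-1}))$ is a Markov chain on $\mathsf X^4$ with transition kernel $\check K_{l,l-1}$ such that for every $z=((x_l,w_l),(x_{l-1},w_{l-1}))\in\mathsf X^4$ and $s\in\{l,l-1\}$, the image of $\check K_{l,l-1}(z,\cdot)$ under the coordinate $x_s'$ is $K_s(x_s,\cdot)$ and under the coordinate $w_s'$ is $K_s(w_s,\cdot)$; its initial law $\check\nu_{l,l-1}$ is such that, for each $s\in\{l,l-1\}$, $(X_{0,s},W_{0,s})$ has law $\check\nu_s$. Meeting times: $\tau_s=\inf\{n\ge1:X_{n,s}=W_{n,s}\}$ for $s\in\{l,l-1\}$, $\check\tau_{l,l-1}=\tau_l\vee\tau_{l-1}$, and faithfulness holds: $X_{n,s}=W_{n,s}$ for all $n\ge\tau_s$. Estimators. For $k\in\mathbb Z^+$ and bounded measurable $\varphi$: $\widehat{\pi_s(\varphi)}_k:=\varphi(X_{k,s})+\sum_{n=k+1}^{\tau_s-1}\{\varphi(X_{n,s})-\varphi(W_{n,s})\}$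 (empty sums are $0$), computed from the level-0 chain when $s=0$ and from the chain $(Z_{n,l,l-1})$ when $s\in\{l,l-1\}$; and $\xi_{l,k}:=\widehat{\pi_l(\varphi)}_k-\widehat{\pi_{l-1}(\varphi)}_k$, both terms computed from $(Z_{n,l,l-1})_n$. Assumptions. (A1) There exist $C<\infty$, $\rho\in(0,1)$ with $\sup_{l\in\mathbb Z^+}\sup_{x\in\mathsf X}\|K_l^n(x,\cdot)-\pi_l\|_{tv}\le C\rho^n$ for all $n\in\mathbb N$. (A2) There exist $C<\infty$, $\rho\in(0,1)$ such that for all $n\in\mathbb N$: $\mathbb P(\tau_0>n)\le C\rho^n$, and for all $l\in\mathbb N$ and $s\in\{l,l-1\}$ the meeting time $\tau_s$ of the chain $(Z_{n,l,l-1})_n$ satisfies $\mathbb P(\tau_s>n)\le C\rho^n$. *)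

theory Defs
  imports "HOL-Probability.Probability"
begin

primrec kernel_pow :: "'a measure \<Rightarrow> ('a \<Rightarrow> 'a measure) \<Rightarrow> nat \<Rightarrow> 'a \<Rightarrow> 'a measure" where
  "kernel_pow M K 0 x = return M x"
| "kernel_pow M K (Suc n) x = bind (kernel_pow M K n x) K"

definition tv_dist :: "'a measure \<Rightarrow> 'a measure \<Rightarrow> real" where
  "tv_dist \<mu> \<nu> = (SUP A \<in> sets \<mu>. \<bar>measure \<mu> A - measure \<nu> A\<bar>)"

primrec path_law :: "'a measure \<Rightarrow> 'a measure \<Rightarrow> ('a \<Rightarrow> 'a measure) \<Rightarrow> nat \<Rightarrow> (nat \<Rightarrow> 'a) measure" where
  "path_law M \<nu> K 0 = distr \<nu> (PiM {..0} (\<lambda>_. M)) (\<lambda>x. \<lambda>i\<in>{..0::nat}. x)"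
| "path_law M \<nu> K (Suc n) =
     bind (path_law M \<nu> K n)
       (\<lambda>\<omega>. distr (K (\<omega> n)) (PiM {..Suc n} (\<lambda>_. M)) (\<lambda>y. fun_upd \<omega> (Suc n) y))"

definition is_markov_chain ::
  "'w measure \<Rightarrow> 'a measure \<Rightarrow> 'a measure \<Rightarrow> ('a \<Rightarrow> 'a measure) \<Rightarrow> (nat \<Rightarrow> 'w \<Rightarrow> 'a) \<Rightarrow> bool" where
  "is_markov_chain P M \<nu> K Y \<longleftrightarrow>
     (\<forall>n. Y n \<in> P \<rightarrow>\<^sub>M M) \<and>
     (\<forall>n. distr P (PiM {..n} (\<lambda>_. M)) (\<lambda>\<omega>. \<lambda>i\<in>{..n}. Y i \<omega>) = path_law M \<nu> K n)"

definition meet_time :: "(nat \<Rightarrow> 'w \<Rightarrow> 'a) \<Rightarrow> (nat \<Rightarrow> 'w \<Rightarrow> 'a) \<Rightarrow> 'w \<Rightarrow> enat" where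
  "meet_time X W \<omega> = (INF n \<in> {n. 1 \<le> n \<and> X n \<omega> = W n \<omega>}. enat n)"

text \<open>The unbiased estimator phi(X_k) + sum_{n=k+1}^{tau-1} (phi(X_n) - phi(W_n));
  set to phi(X_k) on the event tau = infinity (a null event under (A2)).\<close>
definition ub_est :: "('a \<Rightarrow> real) \<Rightarrow> (nat \<Rightarrow> 'w \<Rightarrow> 'a) \<Rightarrow> (nat \<Rightarrow> 'w \<Rightarrow> 'a) \<Rightarrow> nat \<Rightarrow> 'w \<Rightarrow> real" where
  "ub_est \<phi> X W k \<omega> = \<phi> (X k \<omega>) +
     (case meet_time X W \<omega> of
        enat t \<Rightarrow> (\<Sum>n\<in>{k+1..<t}. \<phi> (X n \<omega>) - \<phi> (W n \<omega>))
      | \<infinity> \<Rightarrow> 0)"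

definition check_nu :: "'a measure \<Rightarrow> ('a \<Rightarrow> 'a measure) \<Rightarrow> ('a \<times> 'a) measure \<Rightarrow> ('a \<times> 'a) measure" where
  "check_nu M Ks \<nu>t = bind \<nu>t (\<lambda>(x', w'). distr (Ks x') (M \<Otimes>\<^sub>M M) (\<lambda>x. (x, w')))"

end

theory Submission
  imports Defs
begin


lemma meet_time_le_iff:
  "meet_time X W \<omega> \<le> enat N \<longleftrightarrow> (\<exists>m. 1 \<le> m \<and> m \<le> N \<and> X m \<omega> = W m \<omega>)"
proof
  assume "\<exists>m. 1 \<le> m \<and> m \<le> N \<and> X m \<omega> = W m \<omega>"
  then obtain m where m: "1 \<le> m" "m \<le> N" "X m \<omega> = W m \<omega>" by blast
  have "meet_time X W \<omega> \<le> enat m" unfolding meet_time_def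
    by (rule INF_lower) (use m in auto)
  also have "\<dots> \<le> enat N" using m by simp
  finally show "meet_time X W \<omega> \<le> enat N" .
next
  assume le: "meet_time X W \<omega> \<le> enat N"
  show "\<exists>m. 1 \<le> m \<and> m \<le> N \<and> X m \<omega> = W m \<omega>"
  proof (rule ccontr)
    assume nt: "\<not> ?thesis"
    hence "enat (Suc N) \<le> meet_time X W \<omega>" unfolding meet_time_def
    proof (intro INF_greatest)
      fix i assume "i \<in> {n. 1 \<le> n \<and> X n \<omega> = W n \<omega>}"
      with nt have "\<not> i \<le> N" by auto
      thus "enat (Suc N) \<le> enat i" by simp
    qed
    hence "enat (Suc N) \<le> enat N" using le by (rule order_trans)
    thus False by simp
  qed
qed

lemma meet_time_enat_faithful:
  assumes "meet_time X W \<omega> = enat t" "t \<le> n"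
    and "\<And>n. meet_time X W \<omega> \<le> enat n \<Longrightarrow> X n \<omega> = W n \<omega>"
  shows "X n \<omega> = W n \<omega>"
  using assms by auto




lemma enat_all_less_iff: "(\<forall>n. enat n < x) \<longleftrightarrow> x = \<infinity>"
  by (cases x) auto

lemma est_main:
  fixes P :: "'w measure" and M :: "'a measure" and X W :: "nat \<Rightarrow> 'w \<Rightarrow> 'a"
    and \<phi> :: "'a \<Rightarrow> real" and a :: "nat \<Rightarrow> real"
  assumes P: "prob_space P"
    and Xm[measurable]: "\<And>n. X n \<in> P \<rightarrow>\<^sub>M M" and Wm[measurable]: "\<And>n. W n \<in> P \<rightarrow>\<^sub>M M"
    and diag[measurable]: "\<And>n. Measurable.pred P (\<lambda>\<omega>. X n \<omega> = W n \<omega>)"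
    and phim[measurable]: "\<phi> \<in> borel_measurable M" and phiB: "\<And>x. x \<in> space M \<Longrightarrow> \<bar>\<phi> x\<bar> \<le> B"
    and faith: "\<And>\<omega> n. \<omega> \<in> space P \<Longrightarrow> meet_time X W \<omega> \<le> enat n \<Longrightarrow> X n \<omega> = W n \<omega>"
    and rho: "0 < \<rho>" "\<rho> < 1"
    and tail: "\<And>n. n \<ge> 1 \<Longrightarrow> measure P {\<omega> \<in> space P. meet_time X W \<omega> > enat n} \<le> C * \<rho> ^ n"
    and EX: "\<And>n. (\<integral>\<omega>. \<phi> (X n \<omega>) \<partial>P) = a (Suc n)"
    and EW: "\<And>n. (\<integral>\<omega>. \<phi> (W n \<omega>) \<partial>P) = a n"
    and lim: "a \<longlonglongrightarrow> L"
  shows "integrable P (ub_est \<phi> X W 0) \<and> (\<integral>\<omega>. ub_est \<phi> X W 0 \<omega> \<partial>P) = L"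
proof -
  interpret prob_space P by (rule P)
  define \<tau> where "\<tau> = meet_time X W"
  have gt_iff: "enat n < \<tau> \<omega> \<longleftrightarrow> (\<forall>m. 1 \<le> m \<and> m \<le> n \<longrightarrow> X m \<omega> \<noteq> W m \<omega>)" for n \<omega>
    using meet_time_le_iff[of X W \<omega> n] by (auto simp: \<tau>_def not_le[symmetric])
  have pred_gt[measurable]: "Measurable.pred P (\<lambda>\<omega>. enat n < \<tau> \<omega>)" for n
    unfolding gt_iff by measurable
  have pred_inf[measurable]: "Measurable.pred P (\<lambda>\<omega>. \<tau> \<omega> = \<infinity>)"
    unfolding enat_all_less_iff[symmetric] by measurable
  have B0: "0 \<le> B"
  proof -
    obtain \<omega> where "\<omega> \<in> space P" using not_empty by blast
    hence "X 0 \<omega> \<in> space M" using measurable_space[OF Xm] by blast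
    from phiB[OF this] show ?thesis by linarith
  qed
  define D where "D n \<omega> = \<phi> (X n \<omega>) - \<phi> (W n \<omega>)" for n \<omega>
  define S where "S N \<omega> = \<phi> (X 0 \<omega>) + (\<Sum>n\<in>{1..<N}. D n \<omega>)" for N \<omega>
  have D_meas[measurable]: "D n \<in> borel_measurable P" for n unfolding D_def by measurable
  have S_meas[measurable]: "S N \<in> borel_measurable P" for N unfolding S_def by measurable
  have D0: "D n \<omega> = 0" if "\<omega> \<in> space P" "\<not> enat n < \<tau> \<omega>" for n \<omega>
    using faith[OF that(1), of n] that(2) by (simp add: D_def \<tau>_def not_less)
  have Dle: "\<bar>D n \<omega>\<bar> \<le> 2 * B" if "\<omega> \<in> space P" for n \<omega>
  proof -
    have "X n \<omega> \<in> space M" "W n \<omega> \<in> space M" using measurable_space[OF Xm] measurable_space[OF Wm] that by blast+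
    from phiB[OF this(1)] phiB[OF this(2)] show ?thesis by (simp add: D_def)
  qed
  have t1: "1 \<le> t" if "\<tau> \<omega> = enat t" for t \<omega>
  proof (rule ccontr)
    assume "\<not> 1 \<le> t" hence "t = 0" by simp
    with that have "meet_time X W \<omega> \<le> enat 0" by (simp add: \<tau>_def)
    thus False unfolding meet_time_le_iff by auto
  qed
  have ub_eq: "ub_est \<phi> X W 0 \<omega> = S N \<omega>" if "\<omega> \<in> space P" "\<tau> \<omega> = enat t" "t \<le> N" for \<omega> t N
  proof -
    have "(\<Sum>n\<in>{1..<N}. D n \<omega>) = (\<Sum>n\<in>{1..<t}. D n \<omega>) + (\<Sum>n\<in>{t..<N}. D n \<omega>)"
      using t1[OF that(2)] that(3) by (simp add: sum.atLeastLessThan_concat)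
    also have "(\<Sum>n\<in>{t..<N}. D n \<omega>) = 0"
      by (rule sum.neutral) (use that D0 in auto)
    finally show ?thesis using that unfolding ub_est_def S_def by (simp add: \<tau>_def D_def)
  qed
  have ub_inf: "ub_est \<phi> X W 0 \<omega> = \<phi> (X 0 \<omega>)" if "\<tau> \<omega> = \<infinity>" for \<omega>
    using that unfolding ub_est_def by (simp add: \<tau>_def)
  define T where "T N \<omega> = (if \<not> enat N < \<tau> \<omega> then S N \<omega> else \<phi> (X 0 \<omega>))" for N \<omega>
  have T_meas[measurable]: "T N \<in> borel_measurable P" for N unfolding T_def by measurable
  have ub_meas[measurable]: "ub_est \<phi> X W 0 \<in> borel_measurable P"
  proof (rule borel_measurable_LIMSEQ_metric[OF T_meas])
    fix \<omega> assume \<omega>: "\<omega> \<in> space P"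
    show "(\<lambda>N. T N \<omega>) \<longlonglongrightarrow> ub_est \<phi> X W 0 \<omega>"
    proof (cases "\<tau> \<omega>")
      case (enat t)
      show ?thesis
      proof (rule tendsto_eventually)
        show "\<forall>\<^sub>F N in sequentially. T N \<omega> = ub_est \<phi> X W 0 \<omega>"
          unfolding eventually_sequentially
          using ub_eq[OF \<omega> enat] enat by (auto simp: T_def intro!: exI[of _ t])
      qed
    next
      case infinity
      thus ?thesis by (simp add: T_def ub_inf)
    qed
  qed
  define G where "G n = {\<omega> \<in> space P. enat n < \<tau> \<omega>}" for n
  have G_sets[measurable]: "G n \<in> sets P" for n unfolding G_def by measurable
  have mG: "measure P (G n) \<le> C * \<rho> ^ n" if "n \<ge> 1" for n
    using tail[OF that] by (simp add: G_def \<tau>_def)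
  have C0: "0 \<le> C"
  proof -
    have a1: "measure P (G 1) \<le> C * \<rho>" using mG[of 1] by simp
    have a2: "0 \<le> measure P (G 1)" by (rule measure_nonneg)
    have "0 \<le> C * \<rho>" using a1 a2 by linarith
    with rho show ?thesis by (simp add: zero_le_mult_iff)
  qed
  have AE_fin: "AE \<omega> in P. \<tau> \<omega> \<noteq> \<infinity>"
  proof -
    let ?N = "{\<omega> \<in> space P. \<tau> \<omega> = \<infinity>}"
    have Nsets: "?N \<in> sets P" by measurable
    have "measure P ?N \<le> 0"
    proof (rule LIMSEQ_le_const)
      show "(\<lambda>n. C * \<rho> ^ n) \<longlonglongrightarrow> 0"
        using rho by (intro tendsto_mult_right_zero LIMSEQ_power_zero) auto
      show "\<exists>N. \<forall>n\<ge>N. measure P ?N \<le> C * \<rho> ^ n"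
      proof (intro exI allI impI)
        fix n :: nat assume "1 \<le> n"
        have "measure P ?N \<le> measure P (G n)"
          by (rule finite_measure_mono) (auto simp: G_def)
        also have "\<dots> \<le> C * \<rho> ^ n" using mG \<open>1 \<le> n\<close> by blast
        finally show "measure P ?N \<le> C * \<rho> ^ n" .
      qed
    qed
    hence "measure P ?N = 0" using measure_nonneg[of P ?N] by linarith
    hence "emeasure P ?N = 0" by (simp add: emeasure_eq_measure)
    thus ?thesis by (subst AE_iff_measurable[OF Nsets]) auto
  qed
  have intX: "integrable P (\<lambda>\<omega>. \<phi> (X n \<omega>))" for n
    by (rule integrable_const_bound[where B=B]) (auto intro!: AE_I2 phiB measurable_space[OF Xm])
  have intW: "integrable P (\<lambda>\<omega>. \<phi> (W n \<omega>))" for n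
    by (rule integrable_const_bound[where B=B]) (auto intro!: AE_I2 phiB measurable_space[OF Wm])
  have ES: "(\<integral>\<omega>. S N \<omega> \<partial>P) = a 1 + (\<Sum>n\<in>{1..<N}. a (Suc n) - a n)" for N
    unfolding S_def D_def
    by (simp add: integral_sum integrable_diff intX intW EX EW)
  have tele: "(\<Sum>n\<in>{1..<N}. a (Suc n) - a n) = a N - a 1" if "1 \<le> N" for N
    using that by (induction N) (auto simp: not_less_eq_eq)
  have ES_lim: "(\<lambda>N. \<integral>\<omega>. S N \<omega> \<partial>P) \<longlonglongrightarrow> L"
  proof (rule Lim_transform_eventually[OF lim])
    show "\<forall>\<^sub>F N in sequentially. a N = (\<integral>\<omega>. S N \<omega> \<partial>P)"
      unfolding eventually_sequentially ES
    proof (intro exI[of _ 1] allI impI)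
      fix N :: nat assume "1 \<le> N"
      thus "a N = a 1 + (\<Sum>n\<in>{1..<N}. a (Suc n) - a n)" using tele[of N] by simp
    qed
  qed
  define f :: "nat \<Rightarrow> 'w \<Rightarrow> real" where "f n = indicator (G n)" for n
  define w where "w \<omega> = B + 2 * B * (\<Sum>n. f n \<omega>)" for \<omega>
  have f_meas[measurable]: "f n \<in> borel_measurable P" for n unfolding f_def by measurable
  have f_int: "integrable P (f n)" for n unfolding f_def
    by (rule integrable_const_bound[where B=1]) (auto intro!: AE_I2 simp: indicator_def)
  have f_summ: "summable (\<lambda>n. f n \<omega>)" if "\<tau> \<omega> \<noteq> \<infinity>" for \<omega>
  proof -
    note fin = that
    obtain t where t: "\<tau> \<omega> = enat t" using fin by (cases "\<tau> \<omega>") auto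
    show ?thesis
      by (rule summable_finite[of "{..<t}"]) (auto simp: f_def G_def t indicator_def)
  qed
  have fnorm: "\<bar>f n \<omega>\<bar> = f n \<omega>" "norm (f n \<omega>) = f n \<omega>" for n \<omega> by (simp_all add: f_def indicator_def)
  have w_int: "integrable P w"
  proof -
    have "integrable P (\<lambda>\<omega>. \<Sum>n. f n \<omega>)"
    proof (rule integrable_suminf)
      show "integrable P (f n)" for n by (rule f_int)
      show "AE \<omega> in P. summable (\<lambda>n. norm (f n \<omega>))"
        using AE_fin by (rule AE_mp) (auto intro!: AE_I2 simp: fnorm f_summ)
      show "summable (\<lambda>n. \<integral>\<omega>. norm (f n \<omega>) \<partial>P)"
      proof (rule summable_comparison_test'[where N=1])
        show "summable (\<lambda>n. C * \<rho> ^ n)"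
          using rho by (intro summable_mult summable_geometric) auto
        fix n :: nat assume "1 \<le> n"
        have "(\<integral>\<omega>. norm (f n \<omega>) \<partial>P) = measure P (G n)"
          by (simp add: f_def)
        thus "norm (\<integral>\<omega>. norm (f n \<omega>) \<partial>P) \<le> C * \<rho> ^ n"
          using mG[OF \<open>1 \<le> n\<close>] by simp
      qed
    qed
    thus ?thesis unfolding w_def by (intro Bochner_Integration.integrable_add Bochner_Integration.integrable_mult_right) auto
  qed
  have bound: "AE \<omega> in P. norm (S N \<omega>) \<le> w \<omega>" for N
    using AE_fin
  proof (rule AE_mp, intro AE_I2 impI)
    fix \<omega> assume \<omega>: "\<omega> \<in> space P" and fin: "\<tau> \<omega> \<noteq> \<infinity>"
    have Df: "\<bar>D n \<omega>\<bar> \<le> 2 * B * f n \<omega>" for n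
    proof (cases "enat n < \<tau> \<omega>")
      case True
      hence "f n \<omega> = 1" using \<omega> by (simp add: f_def G_def)
      thus ?thesis using Dle[OF \<omega>, of n] by simp
    next
      case False
      thus ?thesis using D0[OF \<omega> False] \<omega> by (simp add: f_def G_def)
    qed
    have X0: "\<bar>\<phi> (X 0 \<omega>)\<bar> \<le> B" using phiB measurable_space[OF Xm \<omega>] by blast
    have "norm (S N \<omega>) \<le> \<bar>\<phi> (X 0 \<omega>)\<bar> + (\<Sum>n\<in>{1..<N}. \<bar>D n \<omega>\<bar>)"
      unfolding S_def real_norm_def by (rule order_trans[OF abs_triangle_ineq add_left_mono]) (rule sum_abs)
    also have "\<dots> \<le> B + (\<Sum>n\<in>{1..<N}. 2 * B * f n \<omega>)"
      by (intro add_mono X0 sum_mono Df)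
    also have "(\<Sum>n\<in>{1..<N}. 2 * B * f n \<omega>) = 2 * B * (\<Sum>n\<in>{1..<N}. f n \<omega>)"
      by (simp add: sum_distrib_left)
    also have "(\<Sum>n\<in>{1..<N}. f n \<omega>) \<le> (\<Sum>n. f n \<omega>)"
      by (rule sum_le_suminf[OF f_summ[OF fin]]) (auto simp: f_def)
    finally show "norm (S N \<omega>) \<le> w \<omega>" unfolding w_def using B0 by (simp add: mult_left_mono)
  qed
  have conv: "AE \<omega> in P. (\<lambda>N. S N \<omega>) \<longlonglongrightarrow> ub_est \<phi> X W 0 \<omega>"
    using AE_fin
  proof (rule AE_mp, intro AE_I2 impI)
    fix \<omega> assume \<omega>: "\<omega> \<in> space P" and fin: "\<tau> \<omega> \<noteq> \<infinity>"
    obtain t where t: "\<tau> \<omega> = enat t" using fin by (cases "\<tau> \<omega>") auto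
    show "(\<lambda>N. S N \<omega>) \<longlonglongrightarrow> ub_est \<phi> X W 0 \<omega>"
      by (rule tendsto_eventually) (auto simp: eventually_sequentially ub_eq[OF \<omega> t] intro!: exI[of _ t])
  qed
  have "integrable P (ub_est \<phi> X W 0)"
    by (rule integrable_dominated_convergence[OF ub_meas S_meas w_int conv bound])
  moreover have "(\<lambda>N. \<integral>\<omega>. S N \<omega> \<partial>P) \<longlonglongrightarrow> (\<integral>\<omega>. ub_est \<phi> X W 0 \<omega> \<partial>P)"
    by (rule integral_dominated_convergence[OF ub_meas S_meas w_int conv bound])
  ultimately show ?thesis using LIMSEQ_unique[OF _ ES_lim] by blast
qed




lemma mc_law_eq:
  assumes P: "prob_space P" and mc: "is_markov_chain P M' \<nu> K Y"
  shows "distr P M' (Y k) = distr (path_law M' \<nu> K k) M' (\<lambda>\<omega>. \<omega> k)"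
    and "sets (path_law M' \<nu> K k) = sets (PiM {..k} (\<lambda>_. M'))"
    and "space (path_law M' \<nu> K k) \<noteq> {}"
proof -
  have Ym: "\<And>n. Y n \<in> P \<rightarrow>\<^sub>M M'" and pl: "\<And>n. distr P (PiM {..n} (\<lambda>_. M')) (\<lambda>\<omega>. \<lambda>i\<in>{..n}. Y i \<omega>) = path_law M' \<nu> K n"
    using mc unfolding is_markov_chain_def by auto
  have Yr: "(\<lambda>\<omega>. \<lambda>i\<in>{..k}. Y i \<omega>) \<in> P \<rightarrow>\<^sub>M PiM {..k} (\<lambda>_. M')"
    by (rule measurable_restrict) (rule Ym)
  have "distr (path_law M' \<nu> K k) M' (\<lambda>\<omega>. \<omega> k) = distr P M' ((\<lambda>\<omega>. \<omega> k) \<circ> (\<lambda>\<omega>. \<lambda>i\<in>{..k}. Y i \<omega>))"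
    unfolding pl[symmetric] by (rule distr_distr[OF measurable_component_singleton Yr]) simp
  also have "(\<lambda>\<omega>. \<omega> k) \<circ> (\<lambda>\<omega>. \<lambda>i\<in>{..k}. Y i \<omega>) = Y k" by (auto simp: fun_eq_iff)
  finally show "distr P M' (Y k) = distr (path_law M' \<nu> K k) M' (\<lambda>\<omega>. \<omega> k)" by simp
  show "sets (path_law M' \<nu> K k) = sets (PiM {..k} (\<lambda>_. M'))" unfolding pl[symmetric] by simp
  interpret prob_space P by (rule P)
  have "prob_space (path_law M' \<nu> K k)" unfolding pl[symmetric] by (rule prob_space_distr[OF Yr])
  thus "space (path_law M' \<nu> K k) \<noteq> {}" by (rule prob_space.not_empty)
qed

lemma mc_step:
  assumes P: "prob_space P" and mc: "is_markov_chain P M' \<nu> K Y"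
    and Kk: "K \<in> M' \<rightarrow>\<^sub>M subprob_algebra M'"
  shows "distr P M' (Y (Suc n)) = bind (distr P M' (Y n)) K"
proof -
  let ?\<Pi> = "\<lambda>k. PiM {..k} (\<lambda>_. M')"
  let ?L = "path_law M' \<nu> K n"
  note e = mc_law_eq[OF P mc]
  have sL: "sets ?L = sets (?\<Pi> n)" by (rule e(2))
  have projn: "(\<lambda>\<omega>. \<omega> n) \<in> ?L \<rightarrow>\<^sub>M M'"
    using measurable_component_singleton[of n "{..n}" "\<lambda>_. M'"] by (simp add: measurable_cong_sets[OF sL refl])
  have upd: "(\<lambda>z. (fst z)(Suc n := snd z)) \<in> (?L \<Otimes>\<^sub>M M') \<rightarrow>\<^sub>M ?\<Pi> (Suc n)"
  proof -
    have A: "(\<lambda>z. (fst z)(Suc n := snd z)) \<in> (?\<Pi> n \<Otimes>\<^sub>M M') \<rightarrow>\<^sub>M ?\<Pi> (Suc n)"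
      by (rule measurable_fun_upd[where J="{..n}", OF _ measurable_fst measurable_snd]) auto
    have B: "sets (?L \<Otimes>\<^sub>M M') = sets (?\<Pi> n \<Otimes>\<^sub>M M')"
      by (rule sets_pair_measure_cong[OF sL refl])
    show ?thesis by (subst measurable_cong_sets[OF B refl]) (rule A)
  qed
  have F: "(\<lambda>\<omega>. distr (K (\<omega> n)) (?\<Pi> (Suc n)) (\<lambda>y. fun_upd \<omega> (Suc n) y)) \<in> ?L \<rightarrow>\<^sub>M subprob_algebra (?\<Pi> (Suc n))"
  proof (rule measurable_distr2[where M=M'])
    show "(\<lambda>(\<omega>, y). fun_upd \<omega> (Suc n) y) \<in> ?L \<Otimes>\<^sub>M M' \<rightarrow>\<^sub>M ?\<Pi> (Suc n)"
      using upd by (simp add: case_prod_beta')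
    show "(\<lambda>\<omega>. K (\<omega> n)) \<in> ?L \<rightarrow>\<^sub>M subprob_algebra M'"
      by (rule measurable_compose[OF projn Kk])
  qed
  have "distr P M' (Y (Suc n)) = distr (path_law M' \<nu> K (Suc n)) M' (\<lambda>\<omega>. \<omega> (Suc n))"
    by (rule e(1))
  also have "\<dots> = bind ?L (\<lambda>\<omega>. distr (distr (K (\<omega> n)) (?\<Pi> (Suc n)) (\<lambda>y. fun_upd \<omega> (Suc n) y)) M' (\<lambda>\<omega>'. \<omega>' (Suc n)))"
    by (simp only: path_law.simps) (rule distr_bind[OF F e(3) measurable_component_singleton], simp)
  also have "\<dots> = bind ?L (\<lambda>\<omega>. K (\<omega> n))"
  proof (rule bind_cong[OF refl])
    fix \<omega> assume \<omega>: "\<omega> \<in> space ?L"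
    have sK: "sets (K (\<omega> n)) = sets M'"
      using measurable_space[OF projn \<omega>] Kk by (simp add: sets_kernel)
    have "(\<lambda>y. fun_upd \<omega> (Suc n) y) \<in> M' \<rightarrow>\<^sub>M ?\<Pi> (Suc n)"
      using measurable_Pair2[OF upd \<omega>] by simp
    hence m: "(\<lambda>y. fun_upd \<omega> (Suc n) y) \<in> K (\<omega> n) \<rightarrow>\<^sub>M ?\<Pi> (Suc n)"
      by (simp add: measurable_cong_sets[OF sK refl])
    have "distr (distr (K (\<omega> n)) (?\<Pi> (Suc n)) (\<lambda>y. fun_upd \<omega> (Suc n) y)) M' (\<lambda>\<omega>'. \<omega>' (Suc n))
        = distr (K (\<omega> n)) M' ((\<lambda>\<omega>'. \<omega>' (Suc n)) \<circ> (\<lambda>y. fun_upd \<omega> (Suc n) y))"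
      by (rule distr_distr[OF measurable_component_singleton m]) simp
    also have "\<dots> = distr (K (\<omega> n)) M' (\<lambda>y. y)" by (simp add: comp_def)
    also have "\<dots> = K (\<omega> n)" by (rule distr_id2[OF sK[symmetric]])
    finally show "distr (distr (K (\<omega> n)) (?\<Pi> (Suc n)) (\<lambda>y. fun_upd \<omega> (Suc n) y)) M' (\<lambda>\<omega>'. \<omega>' (Suc n)) = K (\<omega> n)" .
  qed
  also have "\<dots> = bind (distr ?L M' (\<lambda>\<omega>. \<omega> n)) K"
    by (rule bind_distr[OF projn Kk e(3), symmetric])
  also have "distr ?L M' (\<lambda>\<omega>. \<omega> n) = distr P M' (Y n)" by (rule e(1)[symmetric])
  finally show ?thesis .
qed

lemma mc_zero:
  assumes P: "prob_space P" and mc: "is_markov_chain P M' \<nu> K Y" and s\<nu>: "sets \<nu> = sets M'"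
  shows "distr P M' (Y 0) = \<nu>"
proof -
  have g: "(\<lambda>x. \<lambda>i\<in>{..0::nat}. x) \<in> \<nu> \<rightarrow>\<^sub>M PiM {..0} (\<lambda>_. M')"
    by (rule measurable_restrict) (simp add: measurable_cong_sets[OF s\<nu> refl])
  have "distr P M' (Y 0) = distr (path_law M' \<nu> K 0) M' (\<lambda>\<omega>. \<omega> 0)"
    by (rule mc_law_eq(1)[OF P mc])
  also have "\<dots> = distr \<nu> M' ((\<lambda>\<omega>. \<omega> 0) \<circ> (\<lambda>x. \<lambda>i\<in>{..0::nat}. x))"
    by (simp only: path_law.simps) (rule distr_distr[OF measurable_component_singleton g], simp)
  also have "\<dots> = distr \<nu> M' (\<lambda>x. x)" by (simp add: comp_def)
  also have "\<dots> = \<nu>" by (rule distr_id2[OF s\<nu>[symmetric]])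
  finally show ?thesis .
qed




lemma int_close:
  fixes f g :: "'a \<Rightarrow> real"
  assumes "prob_space \<mu>" and [measurable]: "f \<in> borel_measurable \<mu>" "g \<in> borel_measurable \<mu>"
    and b: "\<And>x. x \<in> space \<mu> \<Longrightarrow> \<bar>f x\<bar> \<le> Bf \<and> \<bar>g x\<bar> \<le> Bg \<and> \<bar>f x - g x\<bar> \<le> e"
  shows "\<bar>(\<integral>x. f x \<partial>\<mu>) - (\<integral>x. g x \<partial>\<mu>)\<bar> \<le> e"
proof -
  interpret prob_space \<mu> by fact
  have fi: "integrable \<mu> f" by (rule integrable_const_bound[where B=Bf]) (auto intro!: AE_I2 dest: b)
  have gi: "integrable \<mu> g" by (rule integrable_const_bound[where B=Bg]) (auto intro!: AE_I2 dest: b)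
  have "\<bar>(\<integral>x. f x \<partial>\<mu>) - (\<integral>x. g x \<partial>\<mu>)\<bar> = \<bar>\<integral>x. f x - g x \<partial>\<mu>\<bar>"
    using fi gi by simp
  also have "\<dots> \<le> (\<integral>x. \<bar>f x - g x\<bar> \<partial>\<mu>)" by (rule integral_abs_bound)
  also have "\<dots> \<le> (\<integral>x. e \<partial>\<mu>)"
    by (rule integral_mono) (use fi gi b in auto)
  also have "\<dots> = e" by (simp add: prob_space)
  finally show ?thesis .
qed

lemma setwise_integral:
  fixes \<phi> :: "'a \<Rightarrow> real"
  assumes mu: "\<And>n. \<mu> n \<in> space (prob_algebra M)" and pi: "\<pi> \<in> space (prob_algebra M)"
    and conv: "\<And>A. A \<in> sets M \<Longrightarrow> (\<lambda>n. measure (\<mu> n) A) \<longlonglongrightarrow> measure \<pi> A"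
    and phim[measurable]: "\<phi> \<in> borel_measurable M" and phiB: "\<And>x. x \<in> space M \<Longrightarrow> \<bar>\<phi> x\<bar> \<le> B"
  shows "(\<lambda>n. \<integral>x. \<phi> x \<partial>\<mu> n) \<longlonglongrightarrow> (\<integral>x. \<phi> x \<partial>\<pi>)"
proof -
  have smu: "sets (\<mu> n) = sets M" "prob_space (\<mu> n)" for n using mu[of n] by (auto simp: space_prob_algebra)
  have spi: "sets \<pi> = sets M" "prob_space \<pi>" using pi by (auto simp: space_prob_algebra)
  have spmu: "space (\<mu> n) = space M" for n using smu(1) by (rule sets_eq_imp_space_eq)
  have sppi: "space \<pi> = space M" using spi(1) by (rule sets_eq_imp_space_eq)
  show ?thesis unfolding lim_sequentially
  proof (intro allI impI)
    fix r :: real assume r: "0 < r"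
    obtain k :: nat where k: "0 < k" "inverse (real k) < r / 4"
      using ex_inverse_of_nat_less[of "r/4"] r by auto
    define A where "A j = {x \<in> space M. \<lfloor>\<phi> x * k\<rfloor> = j}" for j :: int
    define J where "J = {- \<lceil>B * k\<rceil> - 1 .. \<lceil>B * k\<rceil> + 1}"
    define \<psi> where "\<psi> x = (\<Sum>j\<in>J. (real_of_int j / k) * indicator (A j) x)" for x
    have A_sets[measurable]: "A j \<in> sets M" for j unfolding A_def by measurable
    have psim[measurable]: "\<psi> \<in> borel_measurable M" unfolding \<psi>_def by measurable
    have psi_eq: "\<psi> x = \<lfloor>\<phi> x * k\<rfloor> / k" if x: "x \<in> space M" for x
    proof -
      have inJ: "\<lfloor>\<phi> x * k\<rfloor> \<in> J"
      proof -
        have "\<bar>\<phi> x * k\<bar> \<le> B * k" using phiB[OF x] by (simp add: abs_mult mult_right_mono)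
        hence "- (B * k) \<le> \<phi> x * k" "\<phi> x * k \<le> B * k" by linarith+
        hence "- \<lceil>B * k\<rceil> - 1 \<le> \<lfloor>\<phi> x * k\<rfloor>" "\<lfloor>\<phi> x * k\<rfloor> \<le> \<lceil>B * k\<rceil> + 1"
          by linarith+
        thus ?thesis by (simp add: J_def)
      qed
      have "\<psi> x = (\<Sum>j\<in>J. if j = \<lfloor>\<phi> x * k\<rfloor> then real_of_int j / k else 0)"
        unfolding \<psi>_def by (intro sum.cong refl) (auto simp: A_def x indicator_def)
      also have "\<dots> = \<lfloor>\<phi> x * k\<rfloor> / k" using inJ by (simp add: sum.delta' J_def)
      finally show ?thesis .
    qed
    have close: "\<bar>\<phi> x\<bar> \<le> B \<and> \<bar>\<psi> x\<bar> \<le> B + 1 \<and> \<bar>\<phi> x - \<psi> x\<bar> \<le> inverse (real k)" if x: "x \<in> space M" for x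
    proof -
      have kpos: "(0::real) < k" using k by simp
      have f1: "\<lfloor>\<phi> x * k\<rfloor> \<le> \<phi> x * k" "\<phi> x * k < \<lfloor>\<phi> x * k\<rfloor> + 1" by linarith+
      have d: "\<bar>\<phi> x - \<psi> x\<bar> \<le> inverse (real k)"
      proof -
        have "\<phi> x - \<psi> x = (\<phi> x * k - \<lfloor>\<phi> x * k\<rfloor>) / k" using kpos by (simp add: psi_eq[OF x] field_simps)
        moreover have "0 \<le> \<phi> x * k - \<lfloor>\<phi> x * k\<rfloor>" "\<phi> x * k - \<lfloor>\<phi> x * k\<rfloor> \<le> 1" using f1 by linarith+
        ultimately show ?thesis using kpos by (simp add: divide_le_eq field_simps)
      qed
      have "inverse (real k) \<le> 1" using k(1) by (simp add: inverse_le_1_iff)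
      thus ?thesis using d phiB[OF x] by linarith
    qed
    have intpsi: "(\<integral>x. \<psi> x \<partial>\<nu>) = (\<Sum>j\<in>J. (real_of_int j / k) * measure \<nu> (A j))"
      if "sets \<nu> = sets M" "prob_space \<nu>" for \<nu>
    proof -
      interpret prob_space \<nu> by fact
      have As: "A j \<in> sets \<nu>" for j using that(1) by simp
      have sp: "space \<nu> = space M" using that(1) by (rule sets_eq_imp_space_eq)
      have Aint: "A j \<inter> space \<nu> = A j" for j by (auto simp: A_def sp)
      show ?thesis unfolding \<psi>_def
      proof (subst Bochner_Integration.integral_sum)
        show "integrable \<nu> (\<lambda>x. real_of_int j / real k * indicator (A j) x)" for j
          by (intro Bochner_Integration.integrable_mult_right integrable_real_indicator) (auto simp: As emeasure_eq_measure)
      qed (auto simp: As Aint)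
    qed
    have psiconv: "(\<lambda>n. \<integral>x. \<psi> x \<partial>\<mu> n) \<longlonglongrightarrow> (\<integral>x. \<psi> x \<partial>\<pi>)"
      unfolding intpsi[OF smu] intpsi[OF spi]
      by (intro tendsto_sum tendsto_mult_left conv A_sets)
    then obtain no where no: "\<And>n. n \<ge> no \<Longrightarrow> dist (\<integral>x. \<psi> x \<partial>\<mu> n) (\<integral>x. \<psi> x \<partial>\<pi>) < r / 2"
      unfolding lim_sequentially using r by (metis half_gt_zero)
    show "\<exists>no. \<forall>n\<ge>no. dist (\<integral>x. \<phi> x \<partial>\<mu> n) (\<integral>x. \<phi> x \<partial>\<pi>) < r"
    proof (intro exI allI impI)
      fix n assume "no \<le> n"
      have a: "\<bar>(\<integral>x. \<phi> x \<partial>\<mu> n) - (\<integral>x. \<psi> x \<partial>\<mu> n)\<bar> \<le> inverse (real k)"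
        by (rule int_close[OF smu(2), where Bf=B and Bg="B+1"]) (auto simp: spmu measurable_cong_sets[OF smu(1) refl] close)
      have b: "\<bar>(\<integral>x. \<phi> x \<partial>\<pi>) - (\<integral>x. \<psi> x \<partial>\<pi>)\<bar> \<le> inverse (real k)"
        by (rule int_close[OF spi(2), where Bf=B and Bg="B+1"]) (auto simp: sppi measurable_cong_sets[OF spi(1) refl] close)
      have c: "\<bar>(\<integral>x. \<psi> x \<partial>\<mu> n) - (\<integral>x. \<psi> x \<partial>\<pi>)\<bar> < r / 2"
        using no[OF \<open>no \<le> n\<close>] by (simp add: dist_real_def)
      show "dist (\<integral>x. \<phi> x \<partial>\<mu> n) (\<integral>x. \<phi> x \<partial>\<pi>) < r"
        using a b c k(2) unfolding dist_real_def by linarith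
    qed
  qed
qed




lemma kp_meas:
  assumes K: "K \<in> M \<rightarrow>\<^sub>M prob_algebra M"
  shows "kernel_pow M K n \<in> M \<rightarrow>\<^sub>M prob_algebra M"
proof (induction n)
  case 0
  show ?case by (simp add: measurable_return_prob_space)
next
  case (Suc n)
  have "(\<lambda>x. bind (kernel_pow M K n x) K) \<in> M \<rightarrow>\<^sub>M prob_algebra M"
    by (rule measurable_bind_prob_space[OF Suc K])
  thus ?case by simp
qed

lemma in_prob_algebra_iff: "\<mu> \<in> space (prob_algebra M) \<longleftrightarrow> sets \<mu> = sets M \<and> prob_space \<mu>"
  by (auto simp: space_prob_algebra)

lemma bind_in_prob_algebra:
  assumes "\<mu> \<in> space (prob_algebra M)" "N \<in> M \<rightarrow>\<^sub>M prob_algebra L"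
  shows "bind \<mu> N \<in> space (prob_algebra L)"
  using prob_space_bind'[OF assms] sets_bind'[OF assms] by (simp add: in_prob_algebra_iff)

lemma itr_step:
  assumes K: "K \<in> M \<rightarrow>\<^sub>M prob_algebra M" and s: "sets \<mu> = sets M"
  shows "bind (bind \<mu> (kernel_pow M K n)) K = bind \<mu> (kernel_pow M K (Suc n))"
proof -
  have f: "kernel_pow M K n \<in> \<mu> \<rightarrow>\<^sub>M subprob_algebra M"
    using measurable_prob_algebraD[OF kp_meas[OF K]] by (simp add: measurable_cong_sets[OF s refl])
  show ?thesis
    by (subst bind_assoc[OF f measurable_prob_algebraD[OF K]]) (rule bind_cong, auto)
qed

lemma itr_zero:
  assumes "sets \<mu> = sets M"
  shows "bind \<mu> (kernel_pow M K 0) = \<mu>"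
proof -
  have "bind \<mu> (kernel_pow M K 0) = bind \<mu> (return M)"
    by (rule bind_cong) (auto simp: fun_eq_iff)
  also have "\<dots> = \<mu>" by (rule bind_return''[OF assms])
  finally show ?thesis .
qed

lemma itr_shift:
  assumes K: "K \<in> M \<rightarrow>\<^sub>M prob_algebra M" and \<nu>: "\<nu> \<in> space (prob_algebra M)"
  shows "bind (bind \<nu> K) (kernel_pow M K n) = bind \<nu> (kernel_pow M K (Suc n))"
proof (induction n)
  case 0
  have s1: "sets (bind \<nu> K) = sets M" using bind_in_prob_algebra[OF \<nu> K] by (simp add: in_prob_algebra_iff)
  have s2: "sets \<nu> = sets M" using \<nu> by (simp add: in_prob_algebra_iff)
  have "bind (bind \<nu> K) (kernel_pow M K 0) = bind \<nu> K" by (rule itr_zero[OF s1])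
  also have "\<dots> = bind (bind \<nu> (kernel_pow M K 0)) K" by (simp only: itr_zero[OF s2])
  also have "\<dots> = bind \<nu> (kernel_pow M K (Suc 0))" by (rule itr_step[OF K s2])
  finally show ?case .
next
  case (Suc n)
  have s1: "sets (bind \<nu> K) = sets M" using bind_in_prob_algebra[OF \<nu> K] by (simp add: in_prob_algebra_iff)
  have s2: "sets \<nu> = sets M" using \<nu> by (simp add: in_prob_algebra_iff)
  have "bind (bind \<nu> K) (kernel_pow M K (Suc n)) = bind (bind (bind \<nu> K) (kernel_pow M K n)) K"
    by (rule itr_step[OF K s1, symmetric])
  also have "\<dots> = bind (bind \<nu> (kernel_pow M K (Suc n))) K" by (simp only: Suc)
  also have "\<dots> = bind \<nu> (kernel_pow M K (Suc (Suc n)))" by (rule itr_step[OF K s2])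
  finally show ?case .
qed

lemma measure_bind_real:
  assumes \<nu>: "\<nu> \<in> space (prob_algebra M)" and N: "N \<in> M \<rightarrow>\<^sub>M prob_algebra L" and A: "A \<in> sets L"
  shows "measure (bind \<nu> N) A = (\<integral>x. measure (N x) A \<partial>\<nu>)"
proof -
  have s\<nu>: "sets \<nu> = sets M" "prob_space \<nu>" using \<nu> by (auto simp: in_prob_algebra_iff)
  interpret prob_space \<nu> by (rule s\<nu>(2))
  have sp: "space \<nu> = space M" by (rule sets_eq_imp_space_eq[OF s\<nu>(1)])
  have Nx: "prob_space (N x)" if "x \<in> space M" for x
    using measurable_space[OF N that] by (simp add: in_prob_algebra_iff)
  have mm: "(\<lambda>x. measure (N x) A) \<in> borel_measurable \<nu>"
    using measurable_compose[OF N measurable_measure_prob_algebra[OF A]]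
    by (simp add: measurable_cong_sets[OF s\<nu>(1) refl])
  have int: "integrable \<nu> (\<lambda>x. measure (N x) A)"
    by (rule integrable_const_bound[where B=1]) (auto intro!: AE_I2 mm simp: sp Nx prob_space.prob_le_1)
  have "emeasure (bind \<nu> N) A = (\<integral>\<^sup>+x. emeasure (N x) A \<partial>\<nu>)"
    by (rule emeasure_bind_prob_algebra[OF \<nu> N A])
  also have "\<dots> = (\<integral>\<^sup>+x. ennreal (measure (N x) A) \<partial>\<nu>)"
  proof (rule nn_integral_cong)
    fix x assume "x \<in> space \<nu>"
    then interpret Nxp: prob_space "N x" using Nx sp by simp
    show "emeasure (N x) A = ennreal (measure (N x) A)" by (rule Nxp.emeasure_eq_measure)
  qed
  also have "\<dots> = ennreal (\<integral>x. measure (N x) A \<partial>\<nu>)"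
    by (rule nn_integral_eq_integral[OF int]) simp
  finally have "emeasure (bind \<nu> N) A = ennreal (\<integral>x. measure (N x) A \<partial>\<nu>)" .
  moreover have "0 \<le> (\<integral>x. measure (N x) A \<partial>\<nu>)" by simp
  ultimately show ?thesis by (simp add: measure_def)
qed

lemma iter_conv:
  assumes K: "K \<in> M \<rightarrow>\<^sub>M prob_algebra M" and \<nu>: "\<nu> \<in> space (prob_algebra M)"
    and \<pi>: "\<pi> \<in> space (prob_algebra M)" and A: "A \<in> sets M"
    and rho: "0 < \<rho>" "\<rho> < 1"
    and tv: "\<And>x n. x \<in> space M \<Longrightarrow> 1 \<le> n \<Longrightarrow> tv_dist (kernel_pow M K n x) \<pi> \<le> C * \<rho> ^ n"
  shows "(\<lambda>n. measure (bind \<nu> (kernel_pow M K n)) A) \<longlonglongrightarrow> measure \<pi> A"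
proof -
  have s\<nu>: "sets \<nu> = sets M" "prob_space \<nu>" using \<nu> by (auto simp: in_prob_algebra_iff)
  have sp: "space \<nu> = space M" by (rule sets_eq_imp_space_eq[OF s\<nu>(1)])
  have s\<pi>: "sets \<pi> = sets M" "prob_space \<pi>" using \<pi> by (auto simp: in_prob_algebra_iff)
  have kx: "sets (kernel_pow M K n x) = sets M" "prob_space (kernel_pow M K n x)" if "x \<in> space M" for n x
    using measurable_space[OF kp_meas[OF K] that] by (auto simp: in_prob_algebra_iff)
  have pt: "\<bar>measure (kernel_pow M K n x) A - measure \<pi> A\<bar> \<le> C * \<rho> ^ n" if "x \<in> space M" "1 \<le> n" for x n
  proof -
    have "\<bar>measure (kernel_pow M K n x) A - measure \<pi> A\<bar> \<le> tv_dist (kernel_pow M K n x) \<pi>"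
      unfolding tv_dist_def
    proof (rule cSUP_upper)
      show "A \<in> sets (kernel_pow M K n x)" using kx[OF that(1)] A by simp
      show "bdd_above ((\<lambda>B. \<bar>measure (kernel_pow M K n x) B - measure \<pi> B\<bar>) ` sets (kernel_pow M K n x))"
      proof (rule bdd_aboveI[where M=1], clarify)
        fix B
        have "measure (kernel_pow M K n x) B \<le> 1" "measure \<pi> B \<le> 1"
          using kx(2)[OF that(1)] s\<pi>(2) by (auto intro: prob_space.prob_le_1)
        thus "\<bar>measure (kernel_pow M K n x) B - measure \<pi> B\<bar> \<le> 1"
          using measure_nonneg[of "kernel_pow M K n x" B] measure_nonneg[of \<pi> B] by linarith
      qed
    qed
    thus ?thesis using tv[OF that] by linarith
  qed
  have "(\<lambda>n. measure (bind \<nu> (kernel_pow M K n)) A - measure \<pi> A) \<longlonglongrightarrow> 0"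
  proof (rule Lim_null_comparison)
    show "(\<lambda>n. C * \<rho> ^ n) \<longlonglongrightarrow> 0"
      using rho by (intro tendsto_mult_right_zero LIMSEQ_power_zero) auto
    show "\<forall>\<^sub>F n in sequentially. norm (measure (bind \<nu> (kernel_pow M K n)) A - measure \<pi> A) \<le> C * \<rho> ^ n"
      unfolding eventually_sequentially
    proof (intro exI[of _ 1] allI impI)
      fix n :: nat assume n: "1 \<le> n"
      have mm: "(\<lambda>x. measure (kernel_pow M K n x) A) \<in> borel_measurable \<nu>"
        using measurable_compose[OF kp_meas[OF K] measurable_measure_prob_algebra[OF A]]
        by (simp add: measurable_cong_sets[OF s\<nu>(1) refl])
      have bd: "\<bar>(\<integral>x. measure (kernel_pow M K n x) A \<partial>\<nu>) - (\<integral>x. measure \<pi> A \<partial>\<nu>)\<bar> \<le> C * \<rho> ^ n"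
      proof (rule int_close[OF s\<nu>(2), where Bf=1 and Bg=1])
        fix x assume "x \<in> space \<nu>"
        hence x: "x \<in> space M" by (simp add: sp)
        show "\<bar>measure (kernel_pow M K n x) A\<bar> \<le> 1 \<and> \<bar>measure \<pi> A\<bar> \<le> 1 \<and>
          \<bar>measure (kernel_pow M K n x) A - measure \<pi> A\<bar> \<le> C * \<rho> ^ n"
          using pt[OF x n] kx(2)[OF x] s\<pi>(2) by (auto intro: prob_space.prob_le_1)
      qed (use mm in auto)
      have eq: "(\<integral>x. measure \<pi> A \<partial>\<nu>) = measure \<pi> A"
        using prob_space.prob_space[OF s\<nu>(2)] by simp
      from bd have "\<bar>(\<integral>x. measure (kernel_pow M K n x) A \<partial>\<nu>) - measure \<pi> A\<bar> \<le> C * \<rho> ^ n"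
        by (simp only: eq)
      thus "norm (measure (bind \<nu> (kernel_pow M K n)) A - measure \<pi> A) \<le> C * \<rho> ^ n"
        by (simp only: measure_bind_real[OF \<nu> kp_meas[OF K] A] real_norm_def)
    qed
  qed
  from tendsto_add[OF this tendsto_const[of "measure \<pi> A"]] show ?thesis by simp
qed




lemma coord_law:
  assumes P: "prob_space P" and mc: "is_markov_chain P S \<nu>' Kc Y"
    and Kc: "Kc \<in> S \<rightarrow>\<^sub>M prob_algebra S" and c: "c \<in> S \<rightarrow>\<^sub>M M"
    and K: "K \<in> M \<rightarrow>\<^sub>M prob_algebra M"
    and marg: "\<And>z. z \<in> space S \<Longrightarrow> distr (Kc z) M c = K (c z)"
    and \<nu>': "\<nu>' \<in> space (prob_algebra S)"
  shows "distr P M (\<lambda>\<omega>. c (Y n \<omega>)) = bind (distr \<nu>' M c) (kernel_pow M K n)"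
proof -
  interpret prob_space P by (rule P)
  have Ym: "\<And>n. Y n \<in> P \<rightarrow>\<^sub>M S" using mc unfolding is_markov_chain_def by auto
  define L where "L n = distr P S (Y n)" for n
  have sL: "sets (L n) = sets S" for n by (simp add: L_def)
  have spL: "space (L n) = space S" for n by (simp add: L_def)
  have neL: "space (L n) \<noteq> {}" for n
    unfolding L_def by (rule prob_space.not_empty[OF prob_space_distr[OF Ym]])
  have eq: "distr P M (\<lambda>\<omega>. c (Y n \<omega>)) = distr (L n) M c" for n
    unfolding L_def by (subst distr_distr[OF c Ym]) (simp_all add: comp_def)
  have s\<nu>': "sets \<nu>' = sets S" using \<nu>' by (simp add: in_prob_algebra_iff)
  have \<mu>0: "sets (distr \<nu>' M c) = sets M" by simp
  show ?thesis
  proof (induction n)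
    case 0
    have "distr P M (\<lambda>\<omega>. c (Y 0 \<omega>)) = distr \<nu>' M c"
      unfolding eq L_def mc_zero[OF P mc s\<nu>'] ..
    thus ?case using itr_zero[OF \<mu>0, of K] by (simp only:)
  next
    case (Suc n)
    have Kc': "Kc \<in> L n \<rightarrow>\<^sub>M subprob_algebra S"
      using measurable_prob_algebraD[OF Kc] by (simp add: measurable_cong_sets[OF sL refl])
    have c': "c \<in> L n \<rightarrow>\<^sub>M M" using c by (simp add: measurable_cong_sets[OF sL refl])
    have "distr P M (\<lambda>\<omega>. c (Y (Suc n) \<omega>)) = distr (bind (L n) Kc) M c"
      unfolding eq L_def by (simp only: mc_step[OF P mc measurable_prob_algebraD[OF Kc]])
    also have "\<dots> = bind (L n) (\<lambda>z. distr (Kc z) M c)"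
      by (rule distr_bind[OF Kc' neL c])
    also have "\<dots> = bind (L n) (\<lambda>z. K (c z))"
      by (rule bind_cong[OF refl]) (simp add: spL marg)
    also have "\<dots> = bind (distr (L n) M c) K"
      by (rule bind_distr[OF c' measurable_prob_algebraD[OF K] neL, symmetric])
    also have "\<dots> = bind (bind (distr \<nu>' M c) (kernel_pow M K n)) K"
      using Suc by (simp only: eq)
    also have "\<dots> = bind (distr \<nu>' M c) (kernel_pow M K (Suc n))"
      by (rule itr_step[OF K \<mu>0])
    finally show ?case .
  qed
qed




lemma check_nu_props:
  assumes K: "K \<in> M \<rightarrow>\<^sub>M prob_algebra M" and nt: "nt \<in> space (prob_algebra (M \<Otimes>\<^sub>M M))"
    and f: "distr nt M fst = \<nu>" and s: "distr nt M snd = \<nu>"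
  shows "check_nu M K nt \<in> space (prob_algebra (M \<Otimes>\<^sub>M M))"
    and "distr (check_nu M K nt) M fst = bind \<nu> K"
    and "distr (check_nu M K nt) M snd = \<nu>"
proof -
  define F where "F p = distr (K (fst p)) (M \<Otimes>\<^sub>M M) (\<lambda>x. (x, snd p))" for p
  have cn: "check_nu M K nt = bind nt F"
    unfolding check_nu_def by (rule bind_cong[OF refl]) (auto simp: F_def split: prod.splits)
  have Km[measurable]: "K \<in> M \<rightarrow>\<^sub>M prob_algebra M" by (rule K)
  have Fm: "F \<in> (M \<Otimes>\<^sub>M M) \<rightarrow>\<^sub>M prob_algebra (M \<Otimes>\<^sub>M M)"
    unfolding F_def by measurable
  have snt: "sets nt = sets (M \<Otimes>\<^sub>M M)" "prob_space nt" using nt by (auto simp: in_prob_algebra_iff)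
  have spnt: "space nt = space (M \<Otimes>\<^sub>M M)" by (rule sets_eq_imp_space_eq[OF snt(1)])
  have ne: "space nt \<noteq> {}" by (rule prob_space.not_empty[OF snt(2)])
  have Fm': "F \<in> nt \<rightarrow>\<^sub>M subprob_algebra (M \<Otimes>\<^sub>M M)"
    using measurable_prob_algebraD[OF Fm] by (simp add: measurable_cong_sets[OF snt(1) refl])
  show "check_nu M K nt \<in> space (prob_algebra (M \<Otimes>\<^sub>M M))"
    unfolding cn by (rule bind_in_prob_algebra[OF nt Fm])
  have Kp: "sets (K x) = sets M" "prob_space (K x)" if "x \<in> space M" for x
    using measurable_space[OF K that] by (auto simp: in_prob_algebra_iff)
  have pm: "(\<lambda>x. (x, snd p)) \<in> K (fst p) \<rightarrow>\<^sub>M M \<Otimes>\<^sub>M M" if "p \<in> space (M \<Otimes>\<^sub>M M)" for p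
  proof -
    have A: "(\<lambda>x. (x, snd p)) \<in> M \<rightarrow>\<^sub>M M \<Otimes>\<^sub>M M"
      using that by (auto intro!: measurable_Pair simp: space_pair_measure)
    have fp: "fst p \<in> space M" using that by (auto simp: space_pair_measure)
    show ?thesis by (subst measurable_cong_sets[OF Kp(1)[OF fp] refl]) (rule A)
  qed
  have "distr (check_nu M K nt) M fst = bind nt (\<lambda>p. distr (F p) M fst)"
    unfolding cn by (rule distr_bind[OF Fm' ne measurable_fst])
  also have "\<dots> = bind nt (\<lambda>p. K (fst p))"
  proof (rule bind_cong[OF refl])
    fix p assume p: "p \<in> space nt"
    hence p': "p \<in> space (M \<Otimes>\<^sub>M M)" "fst p \<in> space M" by (auto simp: spnt space_pair_measure)
    have "distr (F p) M fst = distr (K (fst p)) M (fst \<circ> (\<lambda>x. (x, snd p)))"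
      unfolding F_def by (rule distr_distr[OF measurable_fst pm[OF p'(1)]])
    also have "\<dots> = distr (K (fst p)) M (\<lambda>x. x)" by (simp add: comp_def)
    also have "\<dots> = K (fst p)" by (rule distr_id2[OF Kp(1)[OF p'(2), symmetric]])
    finally show "distr (F p) M fst = K (fst p)" .
  qed
  also have "\<dots> = bind (distr nt M fst) K"
    by (rule bind_distr[OF _ measurable_prob_algebraD[OF K] ne, symmetric]) (simp add: measurable_cong_sets[OF snt(1) refl])
  finally show "distr (check_nu M K nt) M fst = bind \<nu> K" by (simp add: f)
  have "distr (check_nu M K nt) M snd = bind nt (\<lambda>p. distr (F p) M snd)"
    unfolding cn by (rule distr_bind[OF Fm' ne measurable_snd])
  also have "\<dots> = bind nt (\<lambda>p. return M (snd p))"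
  proof (rule bind_cong[OF refl])
    fix p assume p: "p \<in> space nt"
    hence p': "p \<in> space (M \<Otimes>\<^sub>M M)" "fst p \<in> space M" "snd p \<in> space M" by (auto simp: spnt space_pair_measure)
    have "distr (F p) M snd = distr (K (fst p)) M (snd \<circ> (\<lambda>x. (x, snd p)))"
      unfolding F_def by (rule distr_distr[OF measurable_snd pm[OF p'(1)]])
    also have "\<dots> = distr (K (fst p)) M (\<lambda>x. snd p)" by (simp add: comp_def)
    also have "\<dots> = return M (snd p)" by (rule prob_space.distr_const[OF Kp(2)[OF p'(2)] p'(3)])
    finally show "distr (F p) M snd = return M (snd p)" .
  qed
  also have "\<dots> = distr nt M snd"
    by (rule bind_return_distr'[OF ne]) (simp add: measurable_cong_sets[OF snt(1) refl])
  finally show "distr (check_nu M K nt) M snd = \<nu>" by (simp add: s)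
qed

lemma chain_est:
  fixes \<phi> :: "'a \<Rightarrow> real"
  assumes P: "prob_space P" and mc: "is_markov_chain P S \<nu>' Kc Y"
    and Kc: "Kc \<in> S \<rightarrow>\<^sub>M prob_algebra S" and \<nu>': "\<nu>' \<in> space (prob_algebra S)"
    and cx[measurable]: "cx \<in> S \<rightarrow>\<^sub>M M" and cw[measurable]: "cw \<in> S \<rightarrow>\<^sub>M M"
    and K: "K \<in> M \<rightarrow>\<^sub>M prob_algebra M"
    and margx: "\<And>z. z \<in> space S \<Longrightarrow> distr (Kc z) M cx = K (cx z)"
    and margw: "\<And>z. z \<in> space S \<Longrightarrow> distr (Kc z) M cw = K (cw z)"
    and initx: "distr \<nu>' M cx = bind \<nu> K" and initw: "distr \<nu>' M cw = \<nu>"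
    and \<nu>: "\<nu> \<in> space (prob_algebra M)" and \<pi>: "\<pi> \<in> space (prob_algebra M)"
    and rho: "0 < \<rho>" "\<rho> < 1"
    and tv: "\<And>x n. x \<in> space M \<Longrightarrow> 1 \<le> n \<Longrightarrow> tv_dist (kernel_pow M K n x) \<pi> \<le> C * \<rho> ^ n"
    and diag: "\<And>n. Measurable.pred P (\<lambda>\<omega>. cx (Y n \<omega>) = cw (Y n \<omega>))"
    and faith: "\<And>\<omega> n. \<omega> \<in> space P \<Longrightarrow> meet_time (\<lambda>n \<omega>. cx (Y n \<omega>)) (\<lambda>n \<omega>. cw (Y n \<omega>)) \<omega> \<le> enat n
        \<Longrightarrow> cx (Y n \<omega>) = cw (Y n \<omega>)"
    and rho': "0 < \<rho>'" "\<rho>' < 1"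
    and tail: "\<And>n. n \<ge> 1 \<Longrightarrow> measure P {\<omega> \<in> space P. meet_time (\<lambda>n \<omega>. cx (Y n \<omega>)) (\<lambda>n \<omega>. cw (Y n \<omega>)) \<omega> > enat n} \<le> C' * \<rho>' ^ n"
    and phim: "\<phi> \<in> borel_measurable M" and phiB: "\<And>x. x \<in> space M \<Longrightarrow> \<bar>\<phi> x\<bar> \<le> B"
  shows "integrable P (ub_est \<phi> (\<lambda>n \<omega>. cx (Y n \<omega>)) (\<lambda>n \<omega>. cw (Y n \<omega>)) 0) \<and>
    (\<integral>\<omega>. ub_est \<phi> (\<lambda>n \<omega>. cx (Y n \<omega>)) (\<lambda>n \<omega>. cw (Y n \<omega>)) 0 \<omega> \<partial>P) = (\<integral>x. \<phi> x \<partial>\<pi>)"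
proof -
  have Ym[measurable]: "\<And>n. Y n \<in> P \<rightarrow>\<^sub>M S" using mc unfolding is_markov_chain_def by auto
  define a where "a n = (\<integral>x. \<phi> x \<partial>bind \<nu> (kernel_pow M K n))" for n
  have lawx: "distr P M (\<lambda>\<omega>. cx (Y n \<omega>)) = bind \<nu> (kernel_pow M K (Suc n))" for n
    using coord_law[OF P mc Kc cx K margx \<nu>', of n] itr_shift[OF K \<nu>, of n] by (simp add: initx)
  have laww: "distr P M (\<lambda>\<omega>. cw (Y n \<omega>)) = bind \<nu> (kernel_pow M K n)" for n
    using coord_law[OF P mc Kc cw K margw \<nu>', of n] by (simp add: initw)
  have EX: "(\<integral>\<omega>. \<phi> (cx (Y n \<omega>)) \<partial>P) = a (Suc n)" for n
    unfolding a_def lawx[symmetric] by (rule integral_distr[symmetric]) (auto simp: phim)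
  have EW: "(\<integral>\<omega>. \<phi> (cw (Y n \<omega>)) \<partial>P) = a n" for n
    unfolding a_def laww[symmetric] by (rule integral_distr[symmetric]) (auto simp: phim)
  have lim: "a \<longlonglongrightarrow> (\<integral>x. \<phi> x \<partial>\<pi>)"
    unfolding a_def
  proof (rule setwise_integral[OF _ \<pi> _ phim phiB])
    show "bind \<nu> (kernel_pow M K n) \<in> space (prob_algebra M)" for n
      by (rule bind_in_prob_algebra[OF \<nu> kp_meas[OF K]])
    show "A \<in> sets M \<Longrightarrow> (\<lambda>n. measure (bind \<nu> (kernel_pow M K n)) A) \<longlonglongrightarrow> measure \<pi> A" for A
      by (rule iter_conv[OF K \<nu> \<pi> _ rho tv])
  qed
  show ?thesis
    by (rule est_main[OF P _ _ diag phim phiB faith rho' tail EX EW lim]) auto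
qed


theorem propositionA1:
  fixes M :: "'a measure"
    and d :: "'a \<Rightarrow> 'a \<Rightarrow> real"
    and pi :: "nat \<Rightarrow> 'a measure"
    and K :: "nat \<Rightarrow> 'a \<Rightarrow> 'a measure"
    and nu :: "nat \<Rightarrow> 'a measure"
    and nut :: "nat \<Rightarrow> ('a \<times> 'a) measure"
    and P :: "'w measure"
    and Kc0 :: "'a \<times> 'a \<Rightarrow> ('a \<times> 'a) measure"
    and Y0 :: "nat \<Rightarrow> 'w \<Rightarrow> 'a \<times> 'a"
    and Kc :: "nat \<Rightarrow> ('a \<times> 'a) \<times> ('a \<times> 'a) \<Rightarrow> (('a \<times> 'a) \<times> ('a \<times> 'a)) measure"
    and nuc :: "nat \<Rightarrow> (('a \<times> 'a) \<times> ('a \<times> 'a)) measure"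
    and Z :: "nat \<Rightarrow> nat \<Rightarrow> 'w \<Rightarrow> ('a \<times> 'a) \<times> ('a \<times> 'a)"
  assumes
    \<comment> \<open>measurable metric on X, bounded, and X compact w.r.t. it\<close>
    metric: "\<forall>x\<in>space M. \<forall>y\<in>space M. (d x y = 0 \<longleftrightarrow> x = y) \<and> d x y = d y x"
    and triangle: "\<forall>x\<in>space M. \<forall>y\<in>space M. \<forall>z\<in>space M. d x z \<le> d x y + d y z"
    and d_meas: "case_prod d \<in> borel_measurable (M \<Otimes>\<^sub>M M)"
    and d_bdd: "\<exists>B. \<forall>x\<in>space M. \<forall>y\<in>space M. d x y \<le> B"
    and compact: "\<forall>s::nat \<Rightarrow> 'a. (\<forall>n. s n \<in> space M) \<longrightarrow>
        (\<exists>r x. strict_mono r \<and> x \<in> space M \<and> (\<lambda>n. d (s (r n)) x) \<longlonglongrightarrow> 0)"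
    \<comment> \<open>probability measures, Markov kernels, invariance\<close>
    and pi_prob: "\<And>l. pi l \<in> space (prob_algebra M)"
    and K_kernel: "\<And>l. K l \<in> M \<rightarrow>\<^sub>M prob_algebra M"
    and K_inv: "\<And>l. bind (pi l) (K l) = pi l"
    and nu_prob: "\<And>l. nu l \<in> space (prob_algebra M)"
    and nut_prob: "\<And>s. nut s \<in> space (prob_algebra (M \<Otimes>\<^sub>M M))"
    and nut_fst: "\<And>s. distr (nut s) M fst = nu s"
    and nut_snd: "\<And>s. distr (nut s) M snd = nu s"
    \<comment> \<open>level-0 coupled chain\<close>
    and P_prob: "prob_space P"
    and Kc0_kernel: "Kc0 \<in> (M \<Otimes>\<^sub>M M) \<rightarrow>\<^sub>M prob_algebra (M \<Otimes>\<^sub>M M)"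
    and Kc0_fst: "\<And>x w. x \<in> space M \<Longrightarrow> w \<in> space M \<Longrightarrow> distr (Kc0 (x, w)) M fst = K 0 x"
    and Kc0_snd: "\<And>x w. x \<in> space M \<Longrightarrow> w \<in> space M \<Longrightarrow> distr (Kc0 (x, w)) M snd = K 0 w"
    and Y0_chain: "is_markov_chain P (M \<Otimes>\<^sub>M M) (check_nu M (K 0) (nut 0)) Kc0 Y0"
    and Y0_faithful: "\<And>\<omega> n. \<omega> \<in> space P \<Longrightarrow>
        meet_time (\<lambda>n \<omega>. fst (Y0 n \<omega>)) (\<lambda>n \<omega>. snd (Y0 n \<omega>)) \<omega> \<le> enat n \<Longrightarrow>
        fst (Y0 n \<omega>) = snd (Y0 n \<omega>)"
    \<comment> \<open>increment chains, l >= 1\<close>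
    and Kc_kernel: "\<And>l. 1 \<le> l \<Longrightarrow>
        Kc l \<in> ((M \<Otimes>\<^sub>M M) \<Otimes>\<^sub>M (M \<Otimes>\<^sub>M M)) \<rightarrow>\<^sub>M prob_algebra ((M \<Otimes>\<^sub>M M) \<Otimes>\<^sub>M (M \<Otimes>\<^sub>M M))"
    and Kc_marg: "\<And>l z. 1 \<le> l \<Longrightarrow> z \<in> space ((M \<Otimes>\<^sub>M M) \<Otimes>\<^sub>M (M \<Otimes>\<^sub>M M)) \<Longrightarrow>
        distr (Kc l z) M (\<lambda>z'. fst (fst z')) = K l (fst (fst z)) \<and>
        distr (Kc l z) M (\<lambda>z'. snd (fst z')) = K l (snd (fst z)) \<and>
        distr (Kc l z) M (\<lambda>z'. fst (snd z')) = K (l - 1) (fst (snd z)) \<and>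
        distr (Kc l z) M (\<lambda>z'. snd (snd z')) = K (l - 1) (snd (snd z))"
    and nuc_prob: "\<And>l. 1 \<le> l \<Longrightarrow> nuc l \<in> space (prob_algebra ((M \<Otimes>\<^sub>M M) \<Otimes>\<^sub>M (M \<Otimes>\<^sub>M M)))"
    and nuc_fst: "\<And>l. 1 \<le> l \<Longrightarrow> distr (nuc l) (M \<Otimes>\<^sub>M M) fst = check_nu M (K l) (nut l)"
    and nuc_snd: "\<And>l. 1 \<le> l \<Longrightarrow> distr (nuc l) (M \<Otimes>\<^sub>M M) snd = check_nu M (K (l - 1)) (nut (l - 1))"
    and Z_chain: "\<And>l. 1 \<le> l \<Longrightarrow> is_markov_chain P ((M \<Otimes>\<^sub>M M) \<Otimes>\<^sub>M (M \<Otimes>\<^sub>M M)) (nuc l) (Kc l) (Z l)"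
    and Z_faithful_l: "\<And>l \<omega> n. 1 \<le> l \<Longrightarrow> \<omega> \<in> space P \<Longrightarrow>
        meet_time (\<lambda>n \<omega>. fst (fst (Z l n \<omega>))) (\<lambda>n \<omega>. snd (fst (Z l n \<omega>))) \<omega> \<le> enat n \<Longrightarrow>
        fst (fst (Z l n \<omega>)) = snd (fst (Z l n \<omega>))"
    and Z_faithful_lm1: "\<And>l \<omega> n. 1 \<le> l \<Longrightarrow> \<omega> \<in> space P \<Longrightarrow>
        meet_time (\<lambda>n \<omega>. fst (snd (Z l n \<omega>))) (\<lambda>n \<omega>. snd (snd (Z l n \<omega>))) \<omega> \<le> enat n \<Longrightarrow>
        fst (snd (Z l n \<omega>)) = snd (snd (Z l n \<omega>))"
    \<comment> \<open>(A1)\<close>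
    and A1: "\<exists>C \<rho>::real. 0 < \<rho> \<and> \<rho> < 1 \<and>
        (\<forall>l. \<forall>x\<in>space M. \<forall>n\<ge>1. tv_dist (kernel_pow M (K l) n x) (pi l) \<le> C * \<rho> ^ n)"
    \<comment> \<open>(A2)\<close>
    and A2: "\<exists>C \<rho>::real. 0 < \<rho> \<and> \<rho> < 1 \<and> (\<forall>n\<ge>1.
        measure P {\<omega> \<in> space P.
           meet_time (\<lambda>n \<omega>. fst (Y0 n \<omega>)) (\<lambda>n \<omega>. snd (Y0 n \<omega>)) \<omega> > enat n} \<le> C * \<rho> ^ n \<and>
        (\<forall>l\<ge>1.
          measure P {\<omega> \<in> space P.
             meet_time (\<lambda>n \<omega>. fst (fst (Z l n \<omega>))) (\<lambda>n \<omega>. snd (fst (Z l n \<omega>))) \<omega> > enat n}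
            \<le> C * \<rho> ^ n \<and>
          measure P {\<omega> \<in> space P.
             meet_time (\<lambda>n \<omega>. fst (snd (Z l n \<omega>))) (\<lambda>n \<omega>. snd (snd (Z l n \<omega>))) \<omega> > enat n}
            \<le> C * \<rho> ^ n))"
  shows "\<forall>l\<ge>1. \<forall>\<phi>::'a \<Rightarrow> real. \<phi> \<in> borel_measurable M \<and> (\<exists>B. \<forall>x\<in>space M. \<bar>\<phi> x\<bar> \<le> B) \<longrightarrow>
      (\<integral>\<omega>. ub_est \<phi> (\<lambda>n \<omega>. fst (Y0 n \<omega>)) (\<lambda>n \<omega>. snd (Y0 n \<omega>)) 0 \<omega> \<partial>P) = (\<integral>x. \<phi> x \<partial>pi 0) \<and>
      (\<integral>\<omega>. ub_est \<phi> (\<lambda>n \<omega>. fst (fst (Z l n \<omega>))) (\<lambda>n \<omega>. snd (fst (Z l n \<omega>))) 0 \<omega>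
            - ub_est \<phi> (\<lambda>n \<omega>. fst (snd (Z l n \<omega>))) (\<lambda>n \<omega>. snd (snd (Z l n \<omega>))) 0 \<omega> \<partial>P)
        = (\<integral>x. \<phi> x \<partial>pi l) - (\<integral>x. \<phi> x \<partial>pi (l - 1))"
proof (intro allI impI, elim conjE exE)
  fix l :: nat and \<phi> :: "'a \<Rightarrow> real" and B
  assume l: "1 \<le> l" and phim: "\<phi> \<in> borel_measurable M" and phiB': "\<forall>x\<in>space M. \<bar>\<phi> x\<bar> \<le> B"
  have phiB: "\<And>x. x \<in> space M \<Longrightarrow> \<bar>\<phi> x\<bar> \<le> B" using phiB' by blast
  obtain C \<rho> :: real where rho: "0 < \<rho>" "\<rho> < 1"
    and tv: "\<And>l x n. x \<in> space M \<Longrightarrow> 1 \<le> n \<Longrightarrow> tv_dist (kernel_pow M (K l) n x) (pi l) \<le> C * \<rho> ^ n"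
    using A1 by blast
  obtain C' \<rho>' :: real where rho': "0 < \<rho>'" "\<rho>' < 1"
    and A2': "\<forall>n\<ge>1.
        measure P {\<omega> \<in> space P.
           meet_time (\<lambda>n \<omega>. fst (Y0 n \<omega>)) (\<lambda>n \<omega>. snd (Y0 n \<omega>)) \<omega> > enat n} \<le> C' * \<rho>' ^ n \<and>
        (\<forall>l\<ge>1.
          measure P {\<omega> \<in> space P.
             meet_time (\<lambda>n \<omega>. fst (fst (Z l n \<omega>))) (\<lambda>n \<omega>. snd (fst (Z l n \<omega>))) \<omega> > enat n}
            \<le> C' * \<rho>' ^ n \<and>
          measure P {\<omega> \<in> space P.
             meet_time (\<lambda>n \<omega>. fst (snd (Z l n \<omega>))) (\<lambda>n \<omega>. snd (snd (Z l n \<omega>))) \<omega> > enat n}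
            \<le> C' * \<rho>' ^ n)"
    using A2 by blast
  have diagP: "Measurable.pred P (\<lambda>\<omega>. X \<omega> = W \<omega>)" if X: "X \<in> P \<rightarrow>\<^sub>M M" and W: "W \<in> P \<rightarrow>\<^sub>M M" for X W
  proof -
    have dm: "(\<lambda>\<omega>. d (X \<omega>) (W \<omega>)) \<in> borel_measurable P"
      using measurable_compose[OF measurable_Pair[OF X W] d_meas] by simp
    hence "Measurable.pred P (\<lambda>\<omega>. d (X \<omega>) (W \<omega>) = 0)" by measurable
    moreover have "(\<lambda>\<omega>. d (X \<omega>) (W \<omega>) = 0) \<in> P \<rightarrow>\<^sub>M count_space UNIV \<longleftrightarrow>
        (\<lambda>\<omega>. X \<omega> = W \<omega>) \<in> P \<rightarrow>\<^sub>M count_space UNIV"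
    proof (rule measurable_cong)
      fix \<omega> assume "\<omega> \<in> space P"
      hence "X \<omega> \<in> space M" "W \<omega> \<in> space M" using measurable_space[OF X] measurable_space[OF W] by blast+
      thus "(d (X \<omega>) (W \<omega>) = 0) = (X \<omega> = W \<omega>)" using metric by blast
    qed
    ultimately show ?thesis by simp
  qed
  have Y0m: "\<And>n. Y0 n \<in> P \<rightarrow>\<^sub>M M \<Otimes>\<^sub>M M" using Y0_chain unfolding is_markov_chain_def by auto
  have Zm: "\<And>n. Z l n \<in> P \<rightarrow>\<^sub>M (M \<Otimes>\<^sub>M M) \<Otimes>\<^sub>M (M \<Otimes>\<^sub>M M)"
    using Z_chain[OF l] unfolding is_markov_chain_def by auto
  have tail0: "measure P {\<omega> \<in> space P. meet_time (\<lambda>n \<omega>. fst (Y0 n \<omega>)) (\<lambda>n \<omega>. snd (Y0 n \<omega>)) \<omega> > enat n} \<le> C' * \<rho>' ^ n"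
    if "n \<ge> 1" for n using A2' that by blast
  have taill: "measure P {\<omega> \<in> space P. meet_time (\<lambda>n \<omega>. fst (fst (Z l n \<omega>))) (\<lambda>n \<omega>. snd (fst (Z l n \<omega>))) \<omega> > enat n} \<le> C' * \<rho>' ^ n"
    if "n \<ge> 1" for n using A2' that l by blast
  have taillm: "measure P {\<omega> \<in> space P. meet_time (\<lambda>n \<omega>. fst (snd (Z l n \<omega>))) (\<lambda>n \<omega>. snd (snd (Z l n \<omega>))) \<omega> > enat n} \<le> C' * \<rho>' ^ n"
    if "n \<ge> 1" for n using A2' that l by blast
  have diag0: "Measurable.pred P (\<lambda>\<omega>. fst (Y0 n \<omega>) = snd (Y0 n \<omega>))" for n
    by (rule diagP) (rule measurable_compose[OF Y0m]; simp)+
  have diagl: "Measurable.pred P (\<lambda>\<omega>. fst (fst (Z l n \<omega>)) = snd (fst (Z l n \<omega>)))" for n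
    by (rule diagP) (rule measurable_compose[OF Zm]; simp)+
  have diaglm: "Measurable.pred P (\<lambda>\<omega>. fst (snd (Z l n \<omega>)) = snd (snd (Z l n \<omega>)))" for n
    by (rule diagP) (rule measurable_compose[OF Zm]; simp)+
  note cn0 = check_nu_props[OF K_kernel[of 0] nut_prob[of 0] nut_fst[of 0] nut_snd[of 0]]
  note cnl = check_nu_props[OF K_kernel[of l] nut_prob[of l] nut_fst[of l] nut_snd[of l]]
  note cnlm = check_nu_props[OF K_kernel[of "l - 1"] nut_prob[of "l - 1"] nut_fst[of "l - 1"] nut_snd[of "l - 1"]]
  have m0x: "distr (Kc0 z) M fst = K 0 (fst z)" and m0w: "distr (Kc0 z) M snd = K 0 (snd z)"
    if "z \<in> space (M \<Otimes>\<^sub>M M)" for z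
    using that Kc0_fst Kc0_snd by (auto simp: space_pair_measure)
  have r0: "integrable P (ub_est \<phi> (\<lambda>n \<omega>. fst (Y0 n \<omega>)) (\<lambda>n \<omega>. snd (Y0 n \<omega>)) 0) \<and>
    (\<integral>\<omega>. ub_est \<phi> (\<lambda>n \<omega>. fst (Y0 n \<omega>)) (\<lambda>n \<omega>. snd (Y0 n \<omega>)) 0 \<omega> \<partial>P) = (\<integral>x. \<phi> x \<partial>pi 0)"
    by (rule chain_est[OF P_prob Y0_chain Kc0_kernel cn0(1) measurable_fst measurable_snd K_kernel[of 0]
          m0x m0w cn0(2) cn0(3) nu_prob[of 0] pi_prob[of 0] rho tv[where l=0] diag0 Y0_faithful rho' tail0 phim phiB])
  have snuc: "sets (nuc l) = sets ((M \<Otimes>\<^sub>M M) \<Otimes>\<^sub>M (M \<Otimes>\<^sub>M M))"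
    using nuc_prob[OF l] by (simp add: in_prob_algebra_iff)
  have dd: "distr (nuc l) M (\<lambda>z. g (h z)) = distr (distr (nuc l) (M \<Otimes>\<^sub>M M) h) M g"
    if "h \<in> (M \<Otimes>\<^sub>M M) \<Otimes>\<^sub>M (M \<Otimes>\<^sub>M M) \<rightarrow>\<^sub>M M \<Otimes>\<^sub>M M" "g \<in> M \<Otimes>\<^sub>M M \<rightarrow>\<^sub>M M" for g h
  proof -
    have h': "h \<in> nuc l \<rightarrow>\<^sub>M M \<Otimes>\<^sub>M M" using that(1) by (simp add: measurable_cong_sets[OF snuc refl])
    show ?thesis by (subst distr_distr[OF that(2) h']) (simp add: comp_def)
  qed
  have ilx: "distr (nuc l) M (\<lambda>z. fst (fst z)) = bind (nu l) (K l)"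
    using dd[OF measurable_fst measurable_fst] nuc_fst[OF l] cnl(2) by simp
  have ilw: "distr (nuc l) M (\<lambda>z. snd (fst z)) = nu l"
    using dd[OF measurable_fst measurable_snd] nuc_fst[OF l] cnl(3) by simp
  have ilmx: "distr (nuc l) M (\<lambda>z. fst (snd z)) = bind (nu (l - 1)) (K (l - 1))"
    using dd[OF measurable_snd measurable_fst] nuc_snd[OF l] cnlm(2) by simp
  have ilmw: "distr (nuc l) M (\<lambda>z. snd (snd z)) = nu (l - 1)"
    using dd[OF measurable_snd measurable_snd] nuc_snd[OF l] cnlm(3) by simp
  have mlx: "distr (Kc l z) M (\<lambda>z'. fst (fst z')) = K l (fst (fst z))"
    and mlw: "distr (Kc l z) M (\<lambda>z'. snd (fst z')) = K l (snd (fst z))"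
    and mlmx: "distr (Kc l z) M (\<lambda>z'. fst (snd z')) = K (l - 1) (fst (snd z))"
    and mlmw: "distr (Kc l z) M (\<lambda>z'. snd (snd z')) = K (l - 1) (snd (snd z))"
    if "z \<in> space ((M \<Otimes>\<^sub>M M) \<Otimes>\<^sub>M (M \<Otimes>\<^sub>M M))" for z
    using Kc_marg[OF l that] by auto
  have ffm: "(\<lambda>z. fst (fst z)) \<in> (M \<Otimes>\<^sub>M M) \<Otimes>\<^sub>M (M \<Otimes>\<^sub>M M) \<rightarrow>\<^sub>M M" by measurable
  have sfm: "(\<lambda>z. snd (fst z)) \<in> (M \<Otimes>\<^sub>M M) \<Otimes>\<^sub>M (M \<Otimes>\<^sub>M M) \<rightarrow>\<^sub>M M" by measurable
  have fsm: "(\<lambda>z. fst (snd z)) \<in> (M \<Otimes>\<^sub>M M) \<Otimes>\<^sub>M (M \<Otimes>\<^sub>M M) \<rightarrow>\<^sub>M M" by measurable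
  have ssm: "(\<lambda>z. snd (snd z)) \<in> (M \<Otimes>\<^sub>M M) \<Otimes>\<^sub>M (M \<Otimes>\<^sub>M M) \<rightarrow>\<^sub>M M" by measurable
  have rl: "integrable P (ub_est \<phi> (\<lambda>n \<omega>. fst (fst (Z l n \<omega>))) (\<lambda>n \<omega>. snd (fst (Z l n \<omega>))) 0) \<and>
    (\<integral>\<omega>. ub_est \<phi> (\<lambda>n \<omega>. fst (fst (Z l n \<omega>))) (\<lambda>n \<omega>. snd (fst (Z l n \<omega>))) 0 \<omega> \<partial>P) = (\<integral>x. \<phi> x \<partial>pi l)"
    by (rule chain_est[OF P_prob Z_chain[OF l] Kc_kernel[OF l] nuc_prob[OF l] ffm sfm K_kernel[of l]
          mlx mlw ilx ilw nu_prob[of l] pi_prob[of l] rho tv[where l=l] diagl Z_faithful_l[OF l] rho' taill phim phiB])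
  have rlm: "integrable P (ub_est \<phi> (\<lambda>n \<omega>. fst (snd (Z l n \<omega>))) (\<lambda>n \<omega>. snd (snd (Z l n \<omega>))) 0) \<and>
    (\<integral>\<omega>. ub_est \<phi> (\<lambda>n \<omega>. fst (snd (Z l n \<omega>))) (\<lambda>n \<omega>. snd (snd (Z l n \<omega>))) 0 \<omega> \<partial>P) = (\<integral>x. \<phi> x \<partial>pi (l - 1))"
    by (rule chain_est[OF P_prob Z_chain[OF l] Kc_kernel[OF l] nuc_prob[OF l] fsm ssm K_kernel[of "l - 1"]
          mlmx mlmw ilmx ilmw nu_prob[of "l - 1"] pi_prob[of "l - 1"] rho tv[where l="l - 1"] diaglm Z_faithful_lm1[OF l] rho' taillm phim phiB])
  show "(\<integral>\<omega>. ub_est \<phi> (\<lambda>n \<omega>. fst (Y0 n \<omega>)) (\<lambda>n \<omega>. snd (Y0 n \<omega>)) 0 \<omega> \<partial>P) = (\<integral>x. \<phi> x \<partial>pi 0) \<and>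
      (\<integral>\<omega>. ub_est \<phi> (\<lambda>n \<omega>. fst (fst (Z l n \<omega>))) (\<lambda>n \<omega>. snd (fst (Z l n \<omega>))) 0 \<omega>
            - ub_est \<phi> (\<lambda>n \<omega>. fst (snd (Z l n \<omega>))) (\<lambda>n \<omega>. snd (snd (Z l n \<omega>))) 0 \<omega> \<partial>P)
        = (\<integral>x. \<phi> x \<partial>pi l) - (\<integral>x. \<phi> x \<partial>pi (l - 1))"
    using r0 rl rlm by (simp add: Bochner_Integration.integral_diff)
qed

end
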